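(* Let $f:[0,\infty)\to\mathbb{R}$ be differentiable, let $0<a<b<\infty$, and suppose $f'$ is Lebesgue integrable on $[a,b]$. Let $m\in(0,1]$ and $q\ge1$, and suppose $|f'|^q$ is $(1,m)$-GA-convex on $[0,\max\{a^{1/m},b\}]$. Then \[ \biggl|\frac{b^2f(b)-a^2f(a)}{2}-\int_a^b xf(x)\,dx\biggr|\le\frac{(b^3-a^3)^{1-1/q}}{6}\Bigl\{m\bigl[L(a^3,b^3)-a^3\bigr]\bigl|f'(a^{1/m})\bigr|^q+\bigl[b^3-L(a^3,b^3)\bigr]|f'(b)|^q\Bigr\}^{1/q}. \]
   Context: For $c>0$, $h:[0,c]\to\mathbb{R}$ and $(\alpha,m)\in(0,1]^2$, $h$ is called $(\alpha,m)$-GA-convex on $[0,c]$ if $h\bigl(x^\lambda y^{m(1-\lambda)}\bigr)\le\lambda^\alpha h(x)+m(1-\lambda^\alpha)h(y)$ for all $x,y\in[0,c]$ and all $\lambda\in[0,1]$ (with the convention $0^0=1$). For $x,y>0$, $x\neq y$, the logarithmic mean is $L(x,y)=\frac{y-x}{\ln y-\ln x}$. *)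

theory Defs
  imports "HOL-Analysis.Analysis"
begin

text \<open>Real power with the convention 0^0 = 1 (Isabelle's powr has 0 powr 0 = 0).\<close>
definition gpow :: "real \<Rightarrow> real \<Rightarrow> real" where
  "gpow x t = (if t = 0 then 1 else x powr t)"

definition GA_convex :: "real \<Rightarrow> real \<Rightarrow> real \<Rightarrow> (real \<Rightarrow> real) \<Rightarrow> bool" where
  "GA_convex \<alpha> m c h \<longleftrightarrow>
     (\<forall>x\<in>{0..c}. \<forall>y\<in>{0..c}. \<forall>t\<in>{0..1}.
        h (gpow x t * gpow y (m * (1 - t))) \<le> gpow t \<alpha> * h x + m * (1 - gpow t \<alpha>) * h y)"

definition logmean :: "real \<Rightarrow> real \<Rightarrow> real" where
  "logmean x y = (y - x) / (ln y - ln x)"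

end

theory Submission
  imports Defs
begin

lemma young_aux:
  fixes u c q :: real
  assumes "u \<ge> 0" "c > 0" "q \<ge> 1"
  shows "q * c powr (q-1) * u \<le> u powr q + (q-1) * c powr q"
proof (cases "q = 1")
  case True then show ?thesis using assms by simp
next
  case False
  then have q1: "q > 1" using assms by simp
  have "u * c powr (q-1) \<le> u powr q / q + (c powr (q-1)) powr (q/(q-1)) / (q/(q-1))"
    by (rule Youngs_inequality) (use q1 assms in \<open>auto simp: field_simps\<close>)
  also have "(c powr (q-1)) powr (q/(q-1)) = c powr q"
    using q1 by (simp add: powr_powr)
  finally have "u * c powr (q-1) \<le> u powr q / q + c powr q * (q-1) / q"
    using q1 by (simp add: field_simps)
  then have "q * (u * c powr (q-1)) \<le> q * (u powr q / q + c powr q * (q-1) / q)"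
    using q1 by (intro mult_left_mono) auto
  also have "q * (u powr q / q + c powr q * (q-1) / q) = u powr q + (q-1) * c powr q"
    using q1 by (simp add: field_simps)
  finally show ?thesis by (simp add: mult_ac)
qed

lemma choose_c:
  fixes R W q :: real
  assumes "R > 0" "W > 0" "q \<ge> 1"
  defines "c \<equiv> (R/W) powr (1/q)"
  shows "(R + (q-1) * c powr q * W) / (q * c powr (q-1)) = W powr (1 - 1/q) * R powr (1/q)"
proof -
  have cq: "c powr q = R/W" using assms by (simp add: c_def powr_powr)
  have cq1: "c powr (q-1) = (R/W) powr (1 - 1/q)" using assms
    by (simp add: c_def powr_powr field_simps)
  have "(R + (q-1) * c powr q * W) = q * R" using cq assms by (simp add: field_simps)
  then have "(R + (q-1) * c powr q * W) / (q * c powr (q-1)) = R / (R/W) powr (1 - 1/q)"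
    using assms cq1 by simp
  also have "\<dots> = R / (R powr (1-1/q) / W powr (1-1/q))"
    using assms by (simp add: powr_divide)
  also have "\<dots> = W powr (1-1/q) * (R / R powr (1-1/q))"
    using assms by (simp add: field_simps)
  also have "R / R powr (1-1/q) = R powr (1/q)"
    using assms by (simp add: powr_diff)
  finally show ?thesis .
qed

lemma pointwise:
  fixes f' :: "real \<Rightarrow> real" and a b m q x :: real
  assumes ab: "0 < a" "a < b" and m: "0 < m" "m \<le> 1"
    and conv: "GA_convex 1 m (max (a powr (1/m)) b) (\<lambda>x. \<bar>f' x\<bar> powr q)"
    and x: "a \<le> x" "x \<le> b"
  shows "\<bar>f' x\<bar> powr q \<le> (ln x - ln a)/(ln b - ln a) * \<bar>f' b\<bar> powr q
           + m * (1 - (ln x - ln a)/(ln b - ln a)) * \<bar>f' (a powr (1/m))\<bar> powr q"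
proof -
  define D where "D = ln b - ln a"
  have D: "D > 0" using ab by (simp add: D_def)
  define t where "t = (ln x - ln a)/D"
  have "ln a \<le> ln x" "ln x \<le> ln b" using ab x by auto
  then have t01: "t \<in> {0..1}" using D by (auto simp: t_def D_def field_simps)
  have b_in: "b \<in> {0..max (a powr (1/m)) b}" using ab by auto
  have a_in: "a powr (1/m) \<in> {0..max (a powr (1/m)) b}" by auto
  have gp: "gpow y s = y powr s" if "y > 0" for y s
    using that by (simp add: gpow_def)
  have g1: "gpow t 1 = t" using t01 by (simp add: gpow_def)
  have "gpow b t * gpow (a powr (1/m)) (m * (1 - t)) = b powr t * a powr (1 - t)"
    using ab m by (simp add: gp powr_powr)
  also have "\<dots> = exp (t * ln b + (1 - t) * ln a)"
    using ab by (simp add: powr_def exp_add)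
  also have "t * ln b + (1 - t) * ln a = ln a + t * D"
    by (simp add: D_def algebra_simps)
  also have "t * D = ln x - ln a" using D by (simp add: t_def)
  also have "ln a + (ln x - ln a) = ln x" by simp
  also have "exp (ln x) = x" using ab x by simp
  finally have arg: "gpow b t * gpow (a powr (1/m)) (m * (1 - t)) = x" .
  from conv[unfolded GA_convex_def] b_in a_in t01
  have "\<bar>f' (gpow b t * gpow (a powr (1/m)) (m * (1 - t)))\<bar> powr q
        \<le> gpow t 1 * \<bar>f' b\<bar> powr q + m * (1 - gpow t 1) * \<bar>f' (a powr (1/m))\<bar> powr q"
    by blast
  from this[unfolded arg g1] show ?thesis by (simp add: t_def D_def)
qed

theorem corollary3p2:
  fixes f f' :: "real \<Rightarrow> real" and a b m q :: real
  assumes deriv: "\<And>x. x \<ge> 0 \<Longrightarrow> (f has_real_derivative f' x) (at x within {0..})"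
    and ab: "0 < a" "a < b"
    and integ: "set_integrable lborel {a..b} f'"
    and m: "0 < m" "m \<le> 1"
    and q: "q \<ge> 1"
    and conv: "GA_convex 1 m (max (a powr (1/m)) b) (\<lambda>x. \<bar>f' x\<bar> powr q)"
  shows "\<bar>(b^2 * f b - a^2 * f a) / 2 - integral {a..b} (\<lambda>x. x * f x)\<bar>
    \<le> (b^3 - a^3) powr (1 - 1/q) / 6 *
       (m * (logmean (a^3) (b^3) - a^3) * \<bar>f' (a powr (1/m))\<bar> powr q
        + (b^3 - logmean (a^3) (b^3)) * \<bar>f' b\<bar> powr q) powr (1/q)"
proof -
  define ha where "ha = \<bar>f' (a powr (1/m))\<bar> powr q"
  define hb where "hb = \<bar>f' b\<bar> powr q"
  define D where "D = ln b - ln a"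
  have D: "D > 0" using ab by (simp add: D_def)
  define H where "H x = (ln x - ln a)/D * hb + m * (1 - (ln x - ln a)/D) * ha" for x
  define L where "L = logmean (a^3) (b^3)"
  define S where "S = m * (L - a^3) * ha + (b^3 - L) * hb"
  define W where "W = (b^3 - a^3) / 3"
  have W: "W > 0" using ab by (simp add: W_def power_strict_mono)
  define LHS where "LHS = \<bar>(b^2 * f b - a^2 * f a) / 2 - integral {a..b} (\<lambda>x. x * f x)\<bar>"
  have pw: "\<bar>f' x\<bar> powr q \<le> H x" if "x \<in> {a..b}" for x
    using pointwise[OF ab m conv, of x] that by (simp add: H_def ha_def hb_def D_def)
  have dsub: "(f has_real_derivative f' x) (at x within {a..b})" if "x \<in> {a..b}" for x
    using deriv[of x] that ab by (auto intro: DERIV_subset)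
  have ftc0: "((\<lambda>x. x * f x + x^2 * f' x / 2) has_integral ((\<lambda>x. x^2 * f x / 2) b - (\<lambda>x. x^2 * f x / 2) a)) {a..b}"
  proof (rule fundamental_theorem_of_calculus)
    show "a \<le> b" using ab by simp
  next
    fix x assume x: "x \<in> {a..b}"
    have "((\<lambda>x. x^2 * f x / 2) has_real_derivative (x * f x + x^2 * f' x / 2)) (at x within {a..b})"
      using dsub[OF x] by (auto intro!: derivative_eq_intros simp: field_simps power2_eq_square)
    then show "((\<lambda>x. x^2 * f x / 2) has_vector_derivative (x * f x + x^2 * f' x / 2)) (at x within {a..b})"
      by (simp add: has_real_derivative_iff_has_vector_derivative)
  qed
  have ftc: "((\<lambda>x. x * f x + x^2 * f' x / 2) has_integral (b^2 * f b / 2 - a^2 * f a / 2)) {a..b}"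
    using ftc0 by simp
  have contf: "continuous_on {a..b} f"
    by (rule DERIV_continuous_on) (use dsub in auto)
  have intxf: "(\<lambda>x. x * f x) integrable_on {a..b}"
    by (intro integrable_continuous_interval continuous_intros contf)
  have intg: "(\<lambda>x. x^2 * f' x / 2) integrable_on {a..b}"
  proof -
    have "(\<lambda>x. (x * f x + x^2 * f' x / 2) - x * f x) integrable_on {a..b}"
      using ftc intxf by (intro integrable_diff) auto
    then show ?thesis by simp
  qed
  have LHS_eq: "LHS = \<bar>integral {a..b} (\<lambda>x. x^2 * f' x / 2)\<bar>"
  proof -
    have "integral {a..b} (\<lambda>x. (x * f x + x^2 * f' x / 2) - x * f x)
          = (b^2 * f b / 2 - a^2 * f a / 2) - integral {a..b} (\<lambda>x. x * f x)"
      using ftc intxf by (subst integral_diff) (auto simp: integral_unique integrable_on_def)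
    then show ?thesis by (simp add: LHS_def diff_divide_distrib)
  qed
  define G where "G x = hb/D * (x^3 * ln x / 3 - x^3/9 - ln a * x^3/3)
      + m * ha * (x^3/3 - (x^3 * ln x / 3 - x^3/9 - ln a * x^3/3)/D)" for x
  have intH: "((\<lambda>x. x^2 * H x) has_integral (G b - G a)) {a..b}"
  proof (rule fundamental_theorem_of_calculus)
    show "a \<le> b" using ab by simp
  next
    fix x assume x: "x \<in> {a..b}"
    then have xp: "x > 0" using ab by auto
    have "(G has_real_derivative x^2 * H x) (at x within {a..b})"
      unfolding G_def H_def
      using xp D by (auto intro!: derivative_eq_intros simp: field_simps power2_eq_square power3_eq_cube)
    then show "(G has_vector_derivative x^2 * H x) (at x within {a..b})"
      by (simp add: has_real_derivative_iff_has_vector_derivative)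
  qed
  have GS: "G b - G a = S / 3"
  proof -
    have l3: "ln (b^3) - ln (a^3) = 3 * D" using ab by (simp add: ln_realpow D_def algebra_simps)
    have L: "L = (b^3 - a^3) / (3 * D)" by (simp add: L_def logmean_def l3)
    have lnb: "ln b = ln a + D" by (simp add: D_def)
    show ?thesis unfolding G_def S_def L lnb using D
      by (simp add: field_simps power3_eq_cube)
  qed
  have Hnn: "H x \<ge> 0" if "x \<in> {a..b}" for x
    using pw[OF that] by (meson order_trans powr_ge_zero)
  have S0: "S \<ge> 0"
    using has_integral_nonneg[OF intH] Hnn GS by (auto intro!: mult_nonneg_nonneg)
  have intx2: "((\<lambda>x. x^2) has_integral W) {a..b}"
  proof -
    have "((\<lambda>x. x^2) has_integral ((\<lambda>x. x^3/3) b - (\<lambda>x. x^3/3) a)) {a..b}"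
      by (rule fundamental_theorem_of_calculus)
         (use ab in \<open>auto intro!: derivative_eq_intros simp: has_real_derivative_iff_has_vector_derivative[symmetric] power2_eq_square\<close>)
    then show ?thesis by (simp add: W_def diff_divide_distrib)
  qed
  have bound: "LHS \<le> (S/3 + (q-1) * c powr q * W) / (q * c powr (q-1)) / 2" if c: "c > 0" for c
  proof -
    define K where "K = q * c powr (q-1)"
    have K: "K > 0" using q c by (simp add: K_def)
    define C where "C = (q-1) * c powr q"
    have hint: "((\<lambda>x. (x^2 * H x + C * x^2) / K / 2) has_integral ((S/3 + C * W) / K / 2)) {a..b}"
      using has_integral_add[OF intH has_integral_cmul[OF intx2, of C]]
      by (intro has_integral_divide) (simp add: GS mult.commute)
    have "LHS \<le> integral {a..b} (\<lambda>x. (x^2 * H x + C * x^2) / K / 2)"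
      unfolding LHS_eq real_norm_def[symmetric]
    proof (rule integral_norm_bound_integral[OF intg])
      show "(\<lambda>x. (x^2 * H x + C * x^2) / K / 2) integrable_on {a..b}"
        using hint by blast
    next
      fix x assume x: "x \<in> {a..b}"
      have "K * \<bar>f' x\<bar> \<le> \<bar>f' x\<bar> powr q + C"
        using young_aux[of "\<bar>f' x\<bar>" c q] c q by (simp add: K_def C_def mult_ac)
      also have "\<dots> \<le> H x + C" using pw[OF x] by simp
      finally have "\<bar>f' x\<bar> \<le> (H x + C) / K" using K by (simp add: field_simps)
      then have "x^2 * \<bar>f' x\<bar> \<le> x^2 * ((H x + C) / K)"
        by (intro mult_left_mono) auto
      then have "x^2 * \<bar>f' x\<bar> / 2 \<le> x^2 * ((H x + C) / K) / 2"
        by (rule divide_right_mono) simp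
      moreover have "norm (x^2 * f' x / 2) = x^2 * \<bar>f' x\<bar> / 2" by (simp add: abs_mult)
      moreover have "(x^2 * H x + C * x^2) / K / 2 = x^2 * ((H x + C) / K) / 2"
        using K by (simp add: field_simps)
      ultimately show "norm (x^2 * f' x / 2) \<le> (x^2 * H x + C * x^2) / K / 2"
        by (simp only:)
    qed
    also have "\<dots> = (S/3 + C * W) / K / 2" using hint by (rule integral_unique)
    finally show ?thesis by (simp add: K_def C_def mult_ac)
  qed
  have RHS: "(b^3 - a^3) powr (1 - 1/q) / 6 * S powr (1/q) = W powr (1 - 1/q) * (S/3) powr (1/q) / 2"
  proof -
    have "W powr (1 - 1/q) * (S/3) powr (1/q)
        = (b^3-a^3) powr (1 - 1/q) * S powr (1/q) / (3 powr (1 - 1/q) * 3 powr (1/q))"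
      using W S0 ab by (simp add: W_def powr_divide)
    also have "3 powr (1 - 1/q) * 3 powr (1/q) = (3::real)"
      by (simp flip: powr_add)
    finally show ?thesis by simp
  qed
  show ?thesis
  proof (cases "S = 0")
    case False
    then have Sp: "S/3 > 0" using S0 by simp
    have c0: "((S/3)/W) powr (1/q) > 0" using Sp W by simp
    have "LHS \<le> W powr (1 - 1/q) * (S/3) powr (1/q) / 2"
      using bound[OF c0] unfolding choose_c[OF Sp W q] .
    then have "LHS \<le> (b^3 - a^3) powr (1 - 1/q) / 6 * S powr (1/q)" by (simp only: RHS)
    then show ?thesis unfolding LHS_def S_def L_def ha_def hb_def .
  next
    case True
    have "LHS \<le> 0"
    proof (rule ccontr)
      assume "\<not> LHS \<le> 0"
      then have Lp: "LHS > 0" by simp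
      show False
      proof (cases "q = 1")
        case True
        then show False using bound[of 1] \<open>S = 0\<close> Lp by simp
      next
        case False
        then have q1: "q > 1" using q by simp
        define c where "c = LHS * q / (q-1) / W"
        have c: "c > 0" using Lp q1 W by (simp add: c_def)
        have "(S/3 + (q-1) * c powr q * W) / (q * c powr (q-1)) / 2 = (q-1) * c * W / q / 2"
          using \<open>S = 0\<close> c q1 by (simp add: powr_diff field_simps)
        also have "\<dots> = LHS / 2" using q1 W by (simp add: c_def field_simps)
        finally have eq: "(S/3 + (q-1) * c powr q * W) / (q * c powr (q-1)) / 2 = LHS / 2" .
        show False using bound[OF c] Lp eq by linarith
      qed
    qed
    moreover have "0 \<le> (b^3 - a^3) powr (1 - 1/q) / 6 * S powr (1/q)" by simp
    ultimately show ?thesis unfolding LHS_def S_def L_def ha_def hb_def by linarith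
  qed
qed

end
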